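(* Let $E_1,E_2$ be nonempty bounded subsets of $M_a$ and $f:E_1\to E_2$ a surjective $d_a$-isometry; let $p\in E_1$ and $q=f(p)$. Let $F:\mathrm{GS}(E_1,p)\to M_a$ be defined by $F\big(p+\sum_i\alpha_i(x_i-p)\big)=q+\sum_i\alpha_i(f(x_i)-q)$ for all $x_i\in E_1$, $\alpha_i\in\mathbb R$ with $\sum_i\alpha_i(x_i-p)\in M_a$. Then $F$ is a $d_a$-isometry, and $F(x)=f(x)$ for all $x\in E_1$.
   Context: Let $a=\{a_i\}$ be a sequence of positive reals with $\sum_i a_i^2<\infty$, $M_a=\{x\in\mathbb{R}^{\mathbb N}:\sum_i a_i^2x_i^2<\infty\}$ with inner product $\langle x,y\rangle_a=\sum_i a_i^2x_iy_i$, norm $\|\cdot\|_a$ and metric $d_a(x,y)=\|x-y\|_a$; a $d_a$-isometry is a map preserving $d_a$. Sums are indexed by finite or countable subsets of $\mathbb N$; infinite sums are $\|\cdot\|_a$-limits of partial sums. For $p\in E\subset M_a$, $\mathrm{GS}(E,p)=\{p+\sum_i\alpha_i(x_i-p)\in M_a: x_i\in E,\ \alpha_i\in\mathbb R\}$. (The map $F$ is well defined: the right-hand side converges and is independent of the representation.) *)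

theory Defs
  imports "HOL-Analysis.Analysis" "HOL-Library.Function_Algebras"
begin

definition M_a :: "(nat \<Rightarrow> real) \<Rightarrow> (nat \<Rightarrow> real) set" where
  "M_a a = {x. summable (\<lambda>i. (a i)\<^sup>2 * (x i)\<^sup>2)}"

definition inner_a :: "(nat \<Rightarrow> real) \<Rightarrow> (nat \<Rightarrow> real) \<Rightarrow> (nat \<Rightarrow> real) \<Rightarrow> real" where
  "inner_a a x y = (\<Sum>i. (a i)\<^sup>2 * x i * y i)"

definition norm_a :: "(nat \<Rightarrow> real) \<Rightarrow> (nat \<Rightarrow> real) \<Rightarrow> real" where
  "norm_a a x = sqrt (inner_a a x x)"

definition d_a :: "(nat \<Rightarrow> real) \<Rightarrow> (nat \<Rightarrow> real) \<Rightarrow> (nat \<Rightarrow> real) \<Rightarrow> real" where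
  "d_a a x y = norm_a a (x - y)"

definition isometry_a :: "(nat \<Rightarrow> real) \<Rightarrow> (nat \<Rightarrow> real) set \<Rightarrow> ((nat \<Rightarrow> real) \<Rightarrow> (nat \<Rightarrow> real)) \<Rightarrow> bool" where
  "isometry_a a A g \<longleftrightarrow> (\<forall>x\<in>A. \<forall>y\<in>A. d_a a (g x) (g y) = d_a a x y)"

definition bounded_a :: "(nat \<Rightarrow> real) \<Rightarrow> (nat \<Rightarrow> real) set \<Rightarrow> bool" where
  "bounded_a a E \<longleftrightarrow> (\<exists>R. \<forall>x\<in>E. norm_a a x \<le> R)"

text \<open>The series \<open>\<Sum>_{i\<in>I} \<alpha>_i (x_i - p)\<close> (indexed by a subset I of \<nat>, summed in the
  natural order of I) converges in d_a to s: partial sums over I \<inter> {..<n}.\<close>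

definition series_to :: "(nat \<Rightarrow> real) \<Rightarrow> nat set \<Rightarrow> (nat \<Rightarrow> (nat \<Rightarrow> real)) \<Rightarrow> (nat \<Rightarrow> real)
    \<Rightarrow> (nat \<Rightarrow> real) \<Rightarrow> (nat \<Rightarrow> real) \<Rightarrow> bool" where
  "series_to a I x \<alpha> p s \<longleftrightarrow>
     ((\<lambda>n. d_a a (\<Sum>i\<in>I \<inter> {..<n}. (\<lambda>k. \<alpha> i * (x i k - p k))) s) \<longlonglongrightarrow> 0)"

definition GS :: "(nat \<Rightarrow> real) \<Rightarrow> (nat \<Rightarrow> real) set \<Rightarrow> (nat \<Rightarrow> real) \<Rightarrow> (nat \<Rightarrow> real) set" where
  "GS a E p = {y. y \<in> M_a a \<and> (\<exists>I x \<alpha> s. (\<forall>i\<in>I. x i \<in> E) \<and> s \<in> M_a a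
                    \<and> series_to a I x \<alpha> p s \<and> y = p + s)}"

end

theory Submission
  imports Defs
begin

lemma sum_fun_apply: "(\<Sum>i\<in>A. g i) k = (\<Sum>i\<in>A. (g i k :: real))"
  by (induction A rule: infinite_finite_induct) auto

lemma Ma_iff: "x \<in> M_a a \<longleftrightarrow> summable (\<lambda>i. (a i)\<^sup>2 * (x i)\<^sup>2)"
  by (simp add: M_a_def)

lemma inner_summable:
  assumes "x \<in> M_a a" "y \<in> M_a a"
  shows "summable (\<lambda>i. (a i)\<^sup>2 * x i * y i)"
proof (rule summable_comparison_test)
  show "summable (\<lambda>i. (a i)\<^sup>2 * (x i)\<^sup>2 + (a i)\<^sup>2 * (y i)\<^sup>2)"
    using assms by (intro summable_add) (auto simp: M_a_def)
  show "\<exists>N. \<forall>n\<ge>N. norm ((a n)\<^sup>2 * x n * y n) \<le> (a n)\<^sup>2 * (x n)\<^sup>2 + (a n)\<^sup>2 * (y n)\<^sup>2"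
  proof (intro exI allI impI)
    fix n
    have "0 \<le> (\<bar>x n\<bar> - \<bar>y n\<bar>)\<^sup>2" by simp
    then have "2 * \<bar>x n * y n\<bar> \<le> (x n)\<^sup>2 + (y n)\<^sup>2"
      by (simp add: power2_eq_square algebra_simps abs_mult)
    then have "\<bar>x n * y n\<bar> \<le> (x n)\<^sup>2 + (y n)\<^sup>2" by linarith
    then have "(a n)\<^sup>2 * \<bar>x n * y n\<bar> \<le> (a n)\<^sup>2 * ((x n)\<^sup>2 + (y n)\<^sup>2)"
      by (intro mult_left_mono) auto
    then show "norm ((a n)\<^sup>2 * x n * y n) \<le> (a n)\<^sup>2 * (x n)\<^sup>2 + (a n)\<^sup>2 * (y n)\<^sup>2"
      by (simp add: abs_mult algebra_simps)
  qed
qed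

lemma Ma_add: "x \<in> M_a a \<Longrightarrow> y \<in> M_a a \<Longrightarrow> x + y \<in> M_a a"
proof -
  assume xy: "x \<in> M_a a" "y \<in> M_a a"
  have "summable (\<lambda>i. (a i)\<^sup>2 * (x i)\<^sup>2 + 2 * ((a i)\<^sup>2 * x i * y i) + (a i)\<^sup>2 * (y i)\<^sup>2)"
    using xy inner_summable[OF xy] by (intro summable_add summable_mult) (auto simp: M_a_def)
  then show ?thesis unfolding M_a_def by (simp add: power2_eq_square algebra_simps)
qed

lemma Ma_scale: "x \<in> M_a a \<Longrightarrow> (\<lambda>k. c * x k) \<in> M_a a"
proof -
  assume "x \<in> M_a a"
  then have "summable (\<lambda>i. c\<^sup>2 * ((a i)\<^sup>2 * (x i)\<^sup>2))" unfolding M_a_def by (intro summable_mult) auto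
  then show ?thesis unfolding M_a_def by (simp add: power2_eq_square algebra_simps)
qed

lemma Ma_uminus: "x \<in> M_a a \<Longrightarrow> - x \<in> M_a a"
  by (simp add: M_a_def)

lemma Ma_diff: "x \<in> M_a a \<Longrightarrow> y \<in> M_a a \<Longrightarrow> x - y \<in> M_a a"
  using Ma_add[of x a "- y"] Ma_uminus[of y a] by simp

lemma Ma_zero: "0 \<in> M_a a" by (simp add: M_a_def)

lemma Ma_sum: "(\<And>i. i \<in> A \<Longrightarrow> g i \<in> M_a a) \<Longrightarrow> (\<Sum>i\<in>A. g i) \<in> M_a a"
  by (induction A rule: infinite_finite_induct) (auto simp: Ma_zero Ma_add)

lemma inner_add_left:
  assumes "x \<in> M_a a" "y \<in> M_a a" "z \<in> M_a a"
  shows "inner_a a (x + y) z = inner_a a x z + inner_a a y z"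
  unfolding inner_a_def
  using suminf_add[OF inner_summable[OF assms(1,3)] inner_summable[OF assms(2,3)]]
  by (simp add: algebra_simps)

lemma inner_scale_left:
  assumes "x \<in> M_a a" "z \<in> M_a a"
  shows "inner_a a (\<lambda>k. c * x k) z = c * inner_a a x z"
  unfolding inner_a_def
  using suminf_mult[OF inner_summable[OF assms], of c]
  by (simp add: algebra_simps)

lemma inner_sym: "inner_a a x y = inner_a a y x"
  unfolding inner_a_def by (simp add: algebra_simps)

lemma inner_uminus_left: "x \<in> M_a a \<Longrightarrow> y \<in> M_a a \<Longrightarrow> inner_a a (- x) y = - inner_a a x y"
  using inner_scale_left[of x a y "-1"] by (simp add: fun_Compl_def)

lemma inner_self_eq: "inner_a a x x = (\<Sum>i. (a i)\<^sup>2 * (x i)\<^sup>2)"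
  by (simp add: inner_a_def power2_eq_square mult.assoc)

lemma inner_diff_left:
  assumes "x \<in> M_a a" "y \<in> M_a a" "z \<in> M_a a"
  shows "inner_a a (x - y) z = inner_a a x z - inner_a a y z"
  using inner_add_left[of x a "- y" z] assms Ma_uminus inner_uminus_left by simp

lemma inner_diff_right:
  assumes "x \<in> M_a a" "y \<in> M_a a" "z \<in> M_a a"
  shows "inner_a a z (x - y) = inner_a a z x - inner_a a z y"
  using inner_diff_left[OF assms] by (simp add: inner_sym)

lemma inner_nonneg: "x \<in> M_a a \<Longrightarrow> inner_a a x x \<ge> 0"
  unfolding inner_self_eq M_a_def by (intro suminf_nonneg) auto

lemma norm_sq: "x \<in> M_a a \<Longrightarrow> (norm_a a x)\<^sup>2 = inner_a a x x"
  unfolding norm_a_def using inner_nonneg by simp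

lemma inner_sum_left:
  assumes "\<And>i. i \<in> A \<Longrightarrow> u i \<in> M_a a" "z \<in> M_a a"
  shows "inner_a a (\<Sum>i\<in>A. (\<lambda>k. c i * u i k)) z = (\<Sum>i\<in>A. c i * inner_a a (u i) z)"
  using assms
proof (induction A rule: infinite_finite_induct)
  case (infinite A) then show ?case by (simp add: inner_a_def)
next
  case empty then show ?case by (simp add: inner_a_def)
next
  case (insert i F)
  have m: "(\<Sum>i\<in>F. (\<lambda>k. c i * u i k)) \<in> M_a a"
    using insert by (intro Ma_sum Ma_scale) auto
  have "inner_a a (\<Sum>i\<in>insert i F. (\<lambda>k. c i * u i k)) z
     = inner_a a ((\<lambda>k. c i * u i k) + (\<Sum>i\<in>F. (\<lambda>k. c i * u i k))) z"
    using insert(1,2) by (intro arg_cong[where f="\<lambda>g. inner_a a g z"] sum.insert)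
  also have "\<dots> = inner_a a (\<lambda>k. c i * u i k) z + inner_a a (\<Sum>i\<in>F. (\<lambda>k. c i * u i k)) z"
    by (rule inner_add_left[OF Ma_scale m insert(5)]) (use insert in auto)
  also have "\<dots> = c i * inner_a a (u i) z + (\<Sum>i\<in>F. c i * inner_a a (u i) z)"
    using insert by (simp add: inner_scale_left)
  also have "\<dots> = (\<Sum>i\<in>insert i F. c i * inner_a a (u i) z)"
    by (rule sum.insert[where g="\<lambda>i. c i * inner_a a (u i) z", OF insert(1,2), symmetric])
  finally show ?case .
qed

lemma inner_sum_sum:
  assumes "\<And>i. i \<in> A \<Longrightarrow> u i \<in> M_a a" "\<And>j. j \<in> B \<Longrightarrow> v j \<in> M_a a"
  shows "inner_a a (\<Sum>i\<in>A. (\<lambda>k. c i * u i k)) (\<Sum>j\<in>B. (\<lambda>k. d j * v j k))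
     = (\<Sum>i\<in>A. \<Sum>j\<in>B. c i * d j * inner_a a (u i) (v j))"
proof -
  have m: "(\<Sum>j\<in>B. (\<lambda>k. d j * v j k)) \<in> M_a a"
    using assms by (intro Ma_sum Ma_scale) auto
  have "inner_a a (\<Sum>i\<in>A. (\<lambda>k. c i * u i k)) (\<Sum>j\<in>B. (\<lambda>k. d j * v j k))
      = (\<Sum>i\<in>A. c i * inner_a a (u i) (\<Sum>j\<in>B. (\<lambda>k. d j * v j k)))"
    using inner_sum_left[where A=A and u=u and c=c, OF assms(1) m] by simp
  also have "\<dots> = (\<Sum>i\<in>A. c i * (\<Sum>j\<in>B. d j * inner_a a (v j) (u i)))"
  proof (intro sum.cong refl)
    fix i assume i: "i \<in> A"
    have "inner_a a (\<Sum>j\<in>B. (\<lambda>k. d j * v j k)) (u i) = (\<Sum>j\<in>B. d j * inner_a a (v j) (u i))"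
      by (rule inner_sum_left[where A=B and u=v and c=d, OF assms(2) assms(1)[OF i]])
    then show "c i * inner_a a (u i) (\<Sum>j\<in>B. (\<lambda>k. d j * v j k)) = c i * (\<Sum>j\<in>B. d j * inner_a a (v j) (u i))"
      by (simp add: inner_sym[of a "u i" "\<Sum>j\<in>B. (\<lambda>k. d j * v j k)"])
  qed
  finally show ?thesis
    by (simp add: sum_distrib_left mult.assoc mult.left_commute inner_sym[of a "v _" "u _"])
qed

lemma norm_diff_sq:
  assumes "x \<in> M_a a" "y \<in> M_a a"
  shows "(norm_a a (x - y))\<^sup>2 = inner_a a x x - 2 * inner_a a x y + inner_a a y y"
  using assms by (simp add: norm_sq Ma_diff inner_diff_left inner_diff_right inner_sym[of a y x])

lemma norm_minus_commute: "norm_a a (x - y) = norm_a a (y - x)"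
  unfolding norm_a_def inner_a_def by (simp add: algebra_simps)

lemma norm_triangle:
  assumes "x \<in> M_a a" "y \<in> M_a a"
  shows "norm_a a (x + y) \<le> norm_a a x + norm_a a y"
proof -
  have L: "sqrt (\<Sum>i<N. (a i)\<^sup>2 * (z i)\<^sup>2) \<le> norm_a a z" if "z \<in> M_a a" for z N
  proof -
    have "(\<Sum>i<N. (a i)\<^sup>2 * (z i)\<^sup>2) \<le> inner_a a z z"
      unfolding inner_self_eq using that unfolding M_a_def
      by (auto intro!: sum_le_suminf)
    then show ?thesis unfolding norm_a_def by simp
  qed
  have "(\<Sum>i<N. (a i)\<^sup>2 * ((x + y) i)\<^sup>2) \<le> (norm_a a x + norm_a a y)\<^sup>2" for N
  proof -
    have "L2_set (\<lambda>i. a i * x i + a i * y i) {..<N} \<le> L2_set (\<lambda>i. a i * x i) {..<N} + L2_set (\<lambda>i. a i * y i) {..<N}"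
      by (rule L2_set_triangle_ineq)
    also have "\<dots> \<le> norm_a a x + norm_a a y"
      using L[OF assms(1), of N] L[OF assms(2), of N] by (simp add: L2_set_def power_mult_distrib)
    finally have "L2_set (\<lambda>i. a i * x i + a i * y i) {..<N} \<le> norm_a a x + norm_a a y" .
    moreover have "L2_set (\<lambda>i. a i * x i + a i * y i) {..<N} = sqrt (\<Sum>i<N. (a i)\<^sup>2 * ((x + y) i)\<^sup>2)"
      by (simp add: L2_set_def power_mult_distrib distrib_left[symmetric])
    ultimately have "sqrt (\<Sum>i<N. (a i)\<^sup>2 * ((x + y) i)\<^sup>2) \<le> norm_a a x + norm_a a y" by simp
    moreover have nn: "0 \<le> (\<Sum>i<N. (a i)\<^sup>2 * ((x + y) i)\<^sup>2)" by (intro sum_nonneg) simp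
    ultimately have "(sqrt (\<Sum>i<N. (a i)\<^sup>2 * ((x + y) i)\<^sup>2))\<^sup>2 \<le> (norm_a a x + norm_a a y)\<^sup>2"
      by (intro power_mono) auto
    then show ?thesis using nn by simp
  qed
  then have "inner_a a (x + y) (x + y) \<le> (norm_a a x + norm_a a y)\<^sup>2"
    unfolding inner_self_eq using Ma_add[OF assms] unfolding M_a_def
    by (intro suminf_le_const) auto
  then have "sqrt (inner_a a (x + y) (x + y)) \<le> sqrt ((norm_a a x + norm_a a y)\<^sup>2)"
    by (rule real_sqrt_le_mono)
  also have "\<dots> = norm_a a x + norm_a a y"
    using inner_nonneg[OF assms(1)] inner_nonneg[OF assms(2)] by (simp add: norm_a_def)
  finally show ?thesis unfolding norm_a_def .
qed


lemma Ma_scale_diff: "x \<in> M_a a \<Longrightarrow> p \<in> M_a a \<Longrightarrow> (\<lambda>k. c * (x k - p k)) \<in> M_a a"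
  using Ma_scale[OF Ma_diff, of x a p c] by simp

lemma norm_nonneg_a: "x \<in> M_a a \<Longrightarrow> norm_a a x \<ge> 0"
  unfolding norm_a_def using inner_nonneg by simp

lemma norm_uminus_a: "norm_a a (- x) = norm_a a x"
  unfolding norm_a_def inner_a_def by simp

lemma norm_zero_a: "norm_a a 0 = 0"
  unfolding norm_a_def inner_a_def by simp

lemma norm_eq_zero_a:
  assumes "\<forall>i. a i > 0" "x \<in> M_a a" "norm_a a x = 0"
  shows "x = 0"
proof -
  have s: "summable (\<lambda>i. (a i)\<^sup>2 * (x i)\<^sup>2)" using assms(2) by (simp add: M_a_def)
  have "inner_a a x x = 0" using assms(3) inner_nonneg[OF assms(2)] by (simp add: norm_a_def)
  then have "(\<Sum>i. (a i)\<^sup>2 * (x i)\<^sup>2) = 0" by (simp add: inner_self_eq)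
  then have "\<forall>i. (a i)\<^sup>2 * (x i)\<^sup>2 = 0" using suminf_eq_zero_iff[OF s] by simp
  then show ?thesis using assms(1) by (auto simp: fun_eq_iff) (metis less_irrefl)
qed

lemma norm_diff_triangle:
  assumes "u \<in> M_a a" "v \<in> M_a a"
  shows "norm_a a (u - v) \<le> norm_a a u + norm_a a v"
  using norm_triangle[OF assms(1) Ma_uminus[OF assms(2)]] norm_uminus_a[of a v] by simp

lemma norm_dist_bound:
  assumes "X \<in> M_a a" "Y \<in> M_a a" "X0 \<in> M_a a" "Y0 \<in> M_a a"
  shows "\<bar>norm_a a (X - Y) - norm_a a (X0 - Y0)\<bar> \<le> norm_a a (X - X0) + norm_a a (Y - Y0)"
proof -
  have 1: "norm_a a (X - Y) \<le> norm_a a (X0 - Y0) + (norm_a a (X - X0) + norm_a a (Y - Y0))"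
  proof -
    have "norm_a a (X - Y) = norm_a a ((X0 - Y0) + ((X - X0) - (Y - Y0)))"
      by (rule arg_cong[where f="norm_a a"]) (simp add: algebra_simps)
    also have "\<dots> \<le> norm_a a (X0 - Y0) + norm_a a ((X - X0) - (Y - Y0))"
      by (rule norm_triangle) (intro Ma_diff assms)+
    also have "norm_a a ((X - X0) - (Y - Y0)) \<le> norm_a a (X - X0) + norm_a a (Y - Y0)"
      by (rule norm_diff_triangle) (intro Ma_diff assms)+
    finally show ?thesis by linarith
  qed
  have 2: "norm_a a (X0 - Y0) \<le> norm_a a (X - Y) + (norm_a a (X - X0) + norm_a a (Y - Y0))"
  proof -
    have "norm_a a (X0 - Y0) = norm_a a ((X - Y) + ((X0 - X) - (Y0 - Y)))"
      by (rule arg_cong[where f="norm_a a"]) (simp add: algebra_simps)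
    also have "\<dots> \<le> norm_a a (X - Y) + norm_a a ((X0 - X) - (Y0 - Y))"
      by (rule norm_triangle) (intro Ma_diff assms)+
    also have "norm_a a ((X0 - X) - (Y0 - Y)) \<le> norm_a a (X0 - X) + norm_a a (Y0 - Y)"
      by (rule norm_diff_triangle) (intro Ma_diff assms)+
    also have "norm_a a (X0 - X) = norm_a a (X - X0)" by (rule norm_minus_commute)
    also have "norm_a a (Y0 - Y) = norm_a a (Y - Y0)" by (rule norm_minus_commute)
    finally show ?thesis by linarith
  qed
  from 1 2 show ?thesis by linarith
qed

lemma norm_conv:
  assumes "\<And>n. P n \<in> M_a a" "\<And>n. Q n \<in> M_a a" "s \<in> M_a a" "t \<in> M_a a"
    and "(\<lambda>n. norm_a a (P n - s)) \<longlonglongrightarrow> 0" "(\<lambda>n. norm_a a (Q n - t)) \<longlonglongrightarrow> 0"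
  shows "(\<lambda>n. norm_a a (P n - Q n)) \<longlonglongrightarrow> norm_a a (s - t)"
proof -
  have "(\<lambda>n. norm_a a (P n - Q n) - norm_a a (s - t)) \<longlonglongrightarrow> 0"
  proof (rule Lim_null_comparison)
    show "\<forall>\<^sub>F n in sequentially. norm (norm_a a (P n - Q n) - norm_a a (s - t))
        \<le> norm_a a (P n - s) + norm_a a (Q n - t)"
      using norm_dist_bound assms(1-4) by (simp add: always_eventually)
    show "(\<lambda>n. norm_a a (P n - s) + norm_a a (Q n - t)) \<longlonglongrightarrow> 0"
      using tendsto_add[OF assms(5,6)] by simp
  qed
  from tendsto_add[OF this tendsto_const[of "norm_a a (s - t)"]] show ?thesis by simp
qed

lemma polarize:
  assumes "x \<in> M_a a" "y \<in> M_a a"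
  shows "inner_a a x y = ((norm_a a x)\<^sup>2 + (norm_a a y)\<^sup>2 - (norm_a a (x - y))\<^sup>2) / 2"
  using norm_diff_sq[OF assms] norm_sq[OF assms(1)] norm_sq[OF assms(2)] by simp

lemma combo_iso:
  assumes pq: "p \<in> M_a a" "q \<in> M_a a" and E: "E \<subseteq> M_a a" "g ` E \<subseteq> M_a a"
    and pres: "\<forall>z\<in>E. \<forall>w\<in>E. inner_a a (z - p) (w - p) = inner_a a (g z - q) (g w - q)"
    and A: "\<forall>i\<in>A. x i \<in> E" and B: "\<forall>j\<in>B. y j \<in> E"
  shows "norm_a a ((\<Sum>i\<in>A. (\<lambda>k. \<alpha> i * (x i k - p k))) - (\<Sum>j\<in>B. (\<lambda>k. \<beta> j * (y j k - p k))))
       = norm_a a ((\<Sum>i\<in>A. (\<lambda>k. \<alpha> i * (g (x i) k - q k))) - (\<Sum>j\<in>B. (\<lambda>k. \<beta> j * (g (y j) k - q k))))"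
proof -
  define S where "S = (\<Sum>i\<in>A. (\<lambda>k. \<alpha> i * (\<lambda>i. x i - p) i k))"
  define T where "T = (\<Sum>j\<in>B. (\<lambda>k. \<beta> j * (\<lambda>j. y j - p) j k))"
  define S' where "S' = (\<Sum>i\<in>A. (\<lambda>k. \<alpha> i * (\<lambda>i. g (x i) - q) i k))"
  define T' where "T' = (\<Sum>j\<in>B. (\<lambda>k. \<beta> j * (\<lambda>j. g (y j) - q) j k))"
  have mA: "\<And>i. i \<in> A \<Longrightarrow> (\<lambda>i. x i - p) i \<in> M_a a" using A E pq by (auto intro!: Ma_diff)
  have mB: "\<And>j. j \<in> B \<Longrightarrow> (\<lambda>j. y j - p) j \<in> M_a a" using B E pq by (auto intro!: Ma_diff)
  have mA': "\<And>i. i \<in> A \<Longrightarrow> (\<lambda>i. g (x i) - q) i \<in> M_a a" using A E pq by (auto intro!: Ma_diff)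
  have mB': "\<And>j. j \<in> B \<Longrightarrow> (\<lambda>j. g (y j) - q) j \<in> M_a a" using B E pq by (auto intro!: Ma_diff)
  have MS: "S \<in> M_a a" "T \<in> M_a a" "S' \<in> M_a a" "T' \<in> M_a a"
    unfolding S_def T_def S'_def T'_def
    by (intro Ma_sum Ma_scale mA mB mA' mB'; assumption)+
  have SS1: "inner_a a S S = (\<Sum>i\<in>A. \<Sum>j\<in>A. \<alpha> i * \<alpha> j * inner_a a (x i - p) (x j - p))"
    unfolding S_def S_def by (rule inner_sum_sum) (erule mA, erule mA)
  have SS2: "inner_a a S' S' = (\<Sum>i\<in>A. \<Sum>j\<in>A. \<alpha> i * \<alpha> j * inner_a a (g (x i) - q) (g (x j) - q))"
    unfolding S'_def S'_def by (rule inner_sum_sum) (erule mA', erule mA')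
  have SS: "inner_a a S S = inner_a a S' S'"
    unfolding SS1 SS2 using pres A by (intro sum.cong refl) auto
  have ST1: "inner_a a S T = (\<Sum>i\<in>A. \<Sum>j\<in>B. \<alpha> i * \<beta> j * inner_a a (x i - p) (y j - p))"
    unfolding S_def T_def by (rule inner_sum_sum) (erule mA, erule mB)
  have ST2: "inner_a a S' T' = (\<Sum>i\<in>A. \<Sum>j\<in>B. \<alpha> i * \<beta> j * inner_a a (g (x i) - q) (g (y j) - q))"
    unfolding S'_def T'_def by (rule inner_sum_sum) (erule mA', erule mB')
  have ST: "inner_a a S T = inner_a a S' T'"
    unfolding ST1 ST2 using pres A B by (intro sum.cong refl) auto
  have TT1: "inner_a a T T = (\<Sum>i\<in>B. \<Sum>j\<in>B. \<beta> i * \<beta> j * inner_a a (y i - p) (y j - p))"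
    unfolding T_def T_def by (rule inner_sum_sum) (erule mB, erule mB)
  have TT2: "inner_a a T' T' = (\<Sum>i\<in>B. \<Sum>j\<in>B. \<beta> i * \<beta> j * inner_a a (g (y i) - q) (g (y j) - q))"
    unfolding T'_def T'_def by (rule inner_sum_sum) (erule mB', erule mB')
  have TT: "inner_a a T T = inner_a a T' T'"
    unfolding TT1 TT2 using pres B by (intro sum.cong refl) auto
  have "norm_a a (S - T) = norm_a a (S' - T')"
  proof -
    have "(norm_a a (S - T))\<^sup>2 = (norm_a a (S' - T'))\<^sup>2"
      using norm_diff_sq[OF MS(1,2)] norm_diff_sq[OF MS(3,4)] SS ST TT by simp
    then show ?thesis using norm_nonneg_a[OF Ma_diff[OF MS(1,2)]] norm_nonneg_a[OF Ma_diff[OF MS(3,4)]]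
      by (simp add: power2_eq_iff_nonneg)
  qed
  then show ?thesis unfolding S_def T_def S'_def T'_def by simp
qed


theorem theorem3p9:
  fixes a :: "nat \<Rightarrow> real"
    and E1 E2 :: "(nat \<Rightarrow> real) set"
    and f F :: "(nat \<Rightarrow> real) \<Rightarrow> (nat \<Rightarrow> real)"
    and p :: "nat \<Rightarrow> real"
  assumes a_pos: "\<forall>i. a i > 0"
    and a_sq: "summable (\<lambda>i. (a i)\<^sup>2)"
    and E1_sub: "E1 \<subseteq> M_a a" and E2_sub: "E2 \<subseteq> M_a a"
    and E1_ne: "E1 \<noteq> {}" and E2_ne: "E2 \<noteq> {}"
    and E1_bd: "bounded_a a E1" and E2_bd: "bounded_a a E2"
    and f_onto: "f ` E1 = E2"
    and f_iso: "isometry_a a E1 f"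
    and p_in: "p \<in> E1"
    and F_range: "\<forall>y\<in>GS a E1 p. F y \<in> M_a a"
    and F_def: "\<forall>I x \<alpha> s. (\<forall>i\<in>I. x i \<in> E1) \<and> s \<in> M_a a \<and> series_to a I x \<alpha> p s
                  \<longrightarrow> series_to a I (\<lambda>i. f (x i)) \<alpha> (f p) (F (p + s) - f p)"
  shows "isometry_a a (GS a E1 p) F \<and> (\<forall>x\<in>E1. F x = f x)"
proof -
  define q where "q = f p"
  have pM: "p \<in> M_a a" using p_in E1_sub by auto
  have fE: "f ` E1 \<subseteq> M_a a" using f_onto E2_sub by auto
  have qM: "q \<in> M_a a" using fE p_in q_def by auto
  have dist: "norm_a a (z - w) = norm_a a (f z - f w)" if "z \<in> E1" "w \<in> E1" for z w
    using f_iso that unfolding isometry_a_def d_a_def by auto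
  have pres: "\<forall>z\<in>E1. \<forall>w\<in>E1. inner_a a (z - p) (w - p) = inner_a a (f z - q) (f w - q)"
  proof (intro ballI)
    fix z w assume z: "z \<in> E1" and w: "w \<in> E1"
    have zM: "z \<in> M_a a" "w \<in> M_a a" "f z \<in> M_a a" "f w \<in> M_a a" using z w E1_sub fE by auto
    have e1: "(z - p) - (w - p) = z - w" "(f z - f p) - (f w - f p) = f z - f w" by simp_all
    show "inner_a a (z - p) (w - p) = inner_a a (f z - q) (f w - q)"
      using polarize[OF Ma_diff[OF zM(1) pM] Ma_diff[OF zM(2) pM]]
        polarize[OF Ma_diff[OF zM(3) qM] Ma_diff[OF zM(4) qM]]
      by (simp only: e1 dist[OF z p_in] dist[OF w p_in] dist[OF z w] q_def)
  qed
  have part1: "isometry_a a (GS a E1 p) F"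
    unfolding isometry_a_def
  proof (intro ballI)
    fix y1 y2 assume y1: "y1 \<in> GS a E1 p" and y2: "y2 \<in> GS a E1 p"
    obtain I x \<alpha> s where x: "\<forall>i\<in>I. x i \<in> E1" and sM: "s \<in> M_a a"
      and ser1: "series_to a I x \<alpha> p s" and y1e: "y1 = p + s"
      using y1 unfolding GS_def by auto
    obtain J y \<beta> t where y: "\<forall>i\<in>J. y i \<in> E1" and tM: "t \<in> M_a a"
      and ser2: "series_to a J y \<beta> p t" and y2e: "y2 = p + t"
      using y2 unfolding GS_def by auto
    have ser1': "series_to a I (\<lambda>i. f (x i)) \<alpha> q (F y1 - q)"
      using F_def x sM ser1 y1e q_def by auto
    have ser2': "series_to a J (\<lambda>i. f (y i)) \<beta> q (F y2 - q)"
      using F_def y tM ser2 y2e q_def by auto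
    have F1: "F y1 - q \<in> M_a a" using F_range y1 qM by (auto intro: Ma_diff)
    have F2: "F y2 - q \<in> M_a a" using F_range y2 qM by (auto intro: Ma_diff)
    define P where "P n = (\<Sum>i\<in>I \<inter> {..<n}. (\<lambda>k. \<alpha> i * (x i k - p k)))" for n
    define Q where "Q n = (\<Sum>i\<in>J \<inter> {..<n}. (\<lambda>k. \<beta> i * (y i k - p k)))" for n
    define P' where "P' n = (\<Sum>i\<in>I \<inter> {..<n}. (\<lambda>k. \<alpha> i * (f (x i) k - q k)))" for n
    define Q' where "Q' n = (\<Sum>i\<in>J \<inter> {..<n}. (\<lambda>k. \<beta> i * (f (y i) k - q k)))" for n
    have xM: "\<And>i. i \<in> I \<Longrightarrow> x i - p \<in> M_a a" using x E1_sub pM by (auto intro: Ma_diff)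
    have yM: "\<And>i. i \<in> J \<Longrightarrow> y i - p \<in> M_a a" using y E1_sub pM by (auto intro: Ma_diff)
    have xM': "\<And>i. i \<in> I \<Longrightarrow> f (x i) - q \<in> M_a a" using x fE qM by (auto intro: Ma_diff)
    have yM': "\<And>i. i \<in> J \<Longrightarrow> f (y i) - q \<in> M_a a" using y fE qM by (auto intro: Ma_diff)
    have PM: "P n \<in> M_a a" "Q n \<in> M_a a" "P' n \<in> M_a a" "Q' n \<in> M_a a" for n
      unfolding P_def Q_def P'_def Q'_def
      using x y E1_sub fE pM qM by (auto intro!: Ma_sum Ma_scale_diff)
    have c1: "(\<lambda>n. norm_a a (P n - Q n)) \<longlonglongrightarrow> norm_a a (s - t)"
      by (rule norm_conv[OF PM(1) PM(2) sM tM])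
        (use ser1 ser2 in \<open>simp_all add: series_to_def d_a_def P_def Q_def\<close>)
    have c2: "(\<lambda>n. norm_a a (P' n - Q' n)) \<longlonglongrightarrow> norm_a a ((F y1 - q) - (F y2 - q))"
      by (rule norm_conv[OF PM(3) PM(4) F1 F2])
        (use ser1' ser2' in \<open>simp_all add: series_to_def d_a_def P'_def Q'_def\<close>)
    have eq: "norm_a a (P n - Q n) = norm_a a (P' n - Q' n)" for n
      unfolding P_def Q_def P'_def Q'_def
      by (rule combo_iso[OF pM qM E1_sub fE pres]) (use x y in auto)
    have "norm_a a (s - t) = norm_a a ((F y1 - q) - (F y2 - q))"
      using LIMSEQ_unique[OF c1 c2[folded eq]] .
    moreover have "(F y1 - q) - (F y2 - q) = F y1 - F y2" by simp
    moreover have "s - t = y1 - y2" using y1e y2e by simp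
    ultimately show "d_a a (F y1) (F y2) = d_a a y1 y2" unfolding d_a_def by simp
  qed
  have part2: "F z = f z" if z: "z \<in> E1" for z
  proof -
    define x where "x = (\<lambda>i::nat. z)"
    define \<alpha> where "\<alpha> = (\<lambda>i::nat. 1::real)"
    have zM: "z \<in> M_a a" using z E1_sub by auto
    have sM: "z - p \<in> M_a a" using zM pM by (rule Ma_diff)
    have Psum: "(\<Sum>i\<in>{0::nat} \<inter> {..<n}. (\<lambda>k. \<alpha> i * (x i k - p k))) = z - p" if "n \<ge> 1" for n
    proof -
      have "{0::nat} \<inter> {..<n} = {0}" using that by auto
      then show ?thesis by (simp add: \<alpha>_def x_def fun_eq_iff)
    qed
    have ser: "series_to a {0} x \<alpha> p (z - p)"
      unfolding series_to_def
    proof (rule LIMSEQ_offset[where k=1])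
      show "(\<lambda>n. d_a a (\<Sum>i\<in>{0} \<inter> {..<n + 1}. (\<lambda>k. \<alpha> i * (x i k - p k))) (z - p)) \<longlonglongrightarrow> 0"
      proof -
        have "d_a a (\<Sum>i\<in>{0} \<inter> {..<n + 1}. (\<lambda>k. \<alpha> i * (x i k - p k))) (z - p) = 0" for n
          by (subst Psum) (simp_all add: d_a_def norm_zero_a)
        then show ?thesis by simp
      qed
    qed
    have zGS: "z \<in> GS a E1 p"
      unfolding GS_def using zM sM ser z x_def
      by (intro CollectI conjI exI[where x="{0}"] exI[where x=x] exI[where x=\<alpha>] exI[where x="z - p"]) auto
    have FzM: "F z \<in> M_a a" using F_range zGS by auto
    have ser': "series_to a {0} (\<lambda>i. f (x i)) \<alpha> q (F z - q)"
      using F_def[rule_format, of "{0}" x "z - p" \<alpha>] z x_def sM ser q_def by auto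
    have Psum': "(\<Sum>i\<in>{0::nat} \<inter> {..<n}. (\<lambda>k. \<alpha> i * (f (x i) k - q k))) = f z - q" if "n \<ge> 1" for n
    proof -
      have "{0::nat} \<inter> {..<n} = {0}" using that by auto
      then show ?thesis by (simp add: \<alpha>_def x_def fun_eq_iff)
    qed
    have "(\<lambda>n. d_a a (\<Sum>i\<in>{0::nat} \<inter> {..<n + 1}. (\<lambda>k. \<alpha> i * (f (x i) k - q k))) (F z - q)) \<longlonglongrightarrow> 0"
      using ser' unfolding series_to_def by (rule LIMSEQ_ignore_initial_segment)
    moreover have e: "(\<Sum>i\<in>{0::nat} \<inter> {..<n + 1}. (\<lambda>k. \<alpha> i * (f (x i) k - q k))) = f z - q" for n
      by (rule Psum') simp
    ultimately have "(\<lambda>n. d_a a (f z - q) (F z - q)) \<longlonglongrightarrow> 0"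
      by (simp only: e)
    then have "d_a a (f z - q) (F z - q) = 0" by (simp add: LIMSEQ_const_iff)
    moreover have "(f z - q) - (F z - q) = f z - F z" by simp
    ultimately have "norm_a a (f z - F z) = 0" unfolding d_a_def by simp
    moreover have "f z - F z \<in> M_a a" using fE z FzM by (auto intro: Ma_diff)
    ultimately have "f z - F z = 0" using norm_eq_zero_a[OF a_pos] by blast
    then show ?thesis by simp
  qed
  show ?thesis using part1 part2 by blast
qed

end
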